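(* Let $s>2$ be a rational number that is not an integer, let $t>1$ be an integer with $p=st$ an integer, and write $q=\lceil s\rceil$. Let $\xi_1,\dots,\xi_q$ be positive integers with $\xi_{q-1}\binom{p-t}{(q-2)t+1}=\xi_q$, $\binom{p-t}{(r-1)t+1}\xi_r=\binom{p-t}{rt}\xi_{r+1}$ for $2\le r\le q-2$, and $(p-t)\xi_1=t\binom{p-t}{t}\xi_2$. Let $\mathcal{C}$ be the array code (over a finite field $\mathbb{F}$, with $t$ rows, entries in $\mathbb{F}^p$ with basis $x_1,\dots,x_p$) whose columns are: (Type $T_1$) for each $t$-subset $A\subseteq\{1,\dots,p\}$, $\xi_1$ columns with cells $x_a$, $a\in A$; (Type $T_r$, $2\le r\le q-1$) for each $(t-1)$-subset $B$ and each $((r-1)t+1)$-subset $C\subseteq\{1,\dots,p\}\setminus B$, $\xi_r$ columns with cells $x_b$ ($b\in B$) and one cell $\sum_{c\in C}x_c$; (Type $T_q$) for each $(t-1)$-subset $B$, $\xi_q$ columns with cells $x_b$ ($b\in B$) and one cell $\sum_{c\notin B}x_c$. Then for every $i\in\{1,\dots,p\}$, the columns of $\mathcal{C}$ that do not have a cell equal to $x_i$ can be partitioned into pairs such that, for each pair, $x_i$ lies in the linear span of the $2t$ cells of the two columns.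
   Context: Columns of an array code are called servers and its entries cells; a cell equal to a single basis vector $x_i$ is called a singleton. *)

theory Defs
  imports Complex_Main "HOL-Library.Function_Algebras"
begin

text \<open>Vectors of F^p are represented as functions nat => F supported on {1..p};
  the basis vector x_a is basis_vec a.\<close>

definition basis_vec :: "nat \<Rightarrow> nat \<Rightarrow> 'a::field" where
  "basis_vec a = (\<lambda>j. if j = a then 1 else 0)"

definition fscale :: "'a::field \<Rightarrow> (nat \<Rightarrow> 'a) \<Rightarrow> (nat \<Rightarrow> 'a)" where
  "fscale c v = (\<lambda>j. c * v j)"

abbreviation fspan :: "(nat \<Rightarrow> 'a::field) set \<Rightarrow> (nat \<Rightarrow> 'a) set" where
  "fspan S \<equiv> module.span fscale S"

text \<open>Column labels (r, B, C, k): type r, the set of singleton indices B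
  (for type 1 this is the t-set A), the set C (empty for types 1 and q),
  and a copy index k < xi r.\<close>
type_synonym label = "nat \<times> nat set \<times> nat set \<times> nat"

definition array_code :: "nat \<Rightarrow> nat \<Rightarrow> nat \<Rightarrow> (nat \<Rightarrow> nat) \<Rightarrow> label set" where
  "array_code p t q xi =
     {(1, A, {}, k) | A k. A \<subseteq> {1..p} \<and> card A = t \<and> k < xi 1}
   \<union> {(r, B, C, k) | r B C k. 2 \<le> r \<and> r \<le> q - 1 \<and> B \<subseteq> {1..p} \<and> card B = t - 1
        \<and> C \<subseteq> {1..p} - B \<and> card C = (r - 1) * t + 1 \<and> k < xi r}
   \<union> {(q, B, {}, k) | B k. B \<subseteq> {1..p} \<and> card B = t - 1 \<and> k < xi q}"

definition cells :: "nat \<Rightarrow> nat \<Rightarrow> label \<Rightarrow> (nat \<Rightarrow> 'a::field) set" where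
  "cells p q l = (case l of (r, B, C, k) \<Rightarrow>
     if r = 1 then basis_vec ` B
     else if r < q then basis_vec ` B \<union> {(\<Sum>c\<in>C. basis_vec c)}
     else basis_vec ` B \<union> {(\<Sum>c\<in>{1..p} - B. basis_vec c)})"

end

theory Submission
  imports Defs
begin

lemma hall:
  fixes A :: "'i \<Rightarrow> 'b set"
  assumes "finite I" "\<And>i. i \<in> I \<Longrightarrow> finite (A i)"
    "\<And>J. J \<subseteq> I \<Longrightarrow> card J \<le> card (\<Union> (A ` J))"
  shows "\<exists>R. inj_on R I \<and> (\<forall>i\<in>I. R i \<in> A i)"
  using assms
proof (induction "card I" arbitrary: I A rule: less_induct)
  case less
  show ?case
  proof (cases "I = {}")
    case True then show ?thesis by auto
  next
    case nonempty: False
    show ?thesis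
    proof (cases "\<forall>J. J \<subseteq> I \<and> J \<noteq> {} \<and> J \<noteq> I \<longrightarrow> card J < card (\<Union>(A ` J))")
      case True
      obtain i0 where i0: "i0 \<in> I" using nonempty by auto
      have "card {i0} \<le> card (A i0)" using less.prems(3)[of "{i0}"] i0 by auto
      then have "A i0 \<noteq> {}" by auto
      then obtain y where y: "y \<in> A i0" by auto
      define I' where "I' = I - {i0}"
      define A' where "A' = (\<lambda>i. A i - {y})"
      have c1: "card I' < card I" unfolding I'_def by (rule card_Diff1_less[OF less.prems(1) i0])
      have c2: "finite I'" using less.prems(1) by (simp add: I'_def)
      have c3: "\<And>i. i\<in>I' \<Longrightarrow> finite (A' i)" using less.prems(2) by (auto simp: A'_def I'_def)
      have c4: "card J \<le> card (\<Union>(A' ` J))" if J: "J \<subseteq> I'" for J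
      proof (cases "J = {}")
        case True then show ?thesis by simp
      next
        case False
        have "J \<subseteq> I" "J \<noteq> I" using J i0 I'_def by auto
        then have lt: "card J < card (\<Union>(A ` J))" using True False by blast
        have eq: "\<Union>(A' ` J) = \<Union>(A ` J) - {y}" by (auto simp: A'_def)
        have "finite J" using J c2 finite_subset by blast
        then have fin: "finite (\<Union>(A ` J))" using less.prems(2) J I'_def by auto
        have "card (\<Union>(A ` J) - {y}) \<ge> card (\<Union>(A ` J)) - 1"
          using diff_card_le_card_Diff[of "{y}" "\<Union>(A ` J)"] by simp
        then show ?thesis unfolding eq using lt by linarith
      qed
      obtain R' where R': "inj_on R' I'" "\<forall>i\<in>I'. R' i \<in> A' i"
        using less.hyps[OF c1 c2 c3 c4] by blast
      define R where "R = R'(i0 := y)"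
      have "inj_on R I"
        unfolding inj_on_def
      proof (intro ballI impI)
        fix a b assume ab: "a \<in> I" "b \<in> I" "R a = R b"
        show "a = b"
        proof (cases "a = i0"; cases "b = i0")
          assume "a = i0" "b \<noteq> i0" then show ?thesis using ab R'(2) by (auto simp: R_def A'_def I'_def)
        next
          assume "a \<noteq> i0" "b = i0" then show ?thesis using ab R'(2) by (auto simp: R_def A'_def I'_def)
        next
          assume "a \<noteq> i0" "b \<noteq> i0" then show ?thesis using ab R'(1) by (auto simp: R_def I'_def inj_on_def)
        qed simp
      qed
      moreover have "\<forall>i\<in>I. R i \<in> A i" using R'(2) y by (auto simp: R_def A'_def I'_def)
      ultimately show ?thesis by blast
    next
      case False
      then obtain J0 where J0: "J0 \<subseteq> I" "J0 \<noteq> {}" "J0 \<noteq> I" "card (\<Union>(A ` J0)) \<le> card J0"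
        by (auto simp: not_less)
      have eqc: "card (\<Union>(A ` J0)) = card J0" using less.prems(3)[OF J0(1)] J0(4) by linarith
      define U where "U = \<Union>(A ` J0)"
      have finJ0: "finite J0" using J0(1) less.prems(1) finite_subset by blast
      have "J0 \<subset> I" using J0 by blast
      then have cJ0: "card J0 < card I" using less.prems(1) by (rule psubset_card_mono[rotated])
      have d3: "\<And>i. i \<in> J0 \<Longrightarrow> finite (A i)" using J0(1) by (intro less.prems(2)) blast
      have d4: "\<And>J. J \<subseteq> J0 \<Longrightarrow> card J \<le> card (\<Union>(A ` J))" using J0(1) by (intro less.prems(3)) blast
      have "\<exists>R. inj_on R J0 \<and> (\<forall>i\<in>J0. R i \<in> A i)" by (rule less.hyps[OF cJ0 finJ0 d3 d4])
      then obtain R1 where R1: "inj_on R1 J0" "\<forall>i\<in>J0. R1 i \<in> A i" by blast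
      define I2 where "I2 = I - J0"
      define A2 where "A2 = (\<lambda>i. A i - U)"
      have c1: "card I2 < card I" unfolding I2_def using J0 less.prems(1)
      proof -
        have "card (I - J0) = card I - card J0" using J0(1) finJ0 by (simp add: card_Diff_subset)
        moreover have "card J0 > 0" using J0(2) finJ0 by (simp add: card_gt_0_iff)
        ultimately show "card (I - J0) < card I" using cJ0 by linarith
      qed
      have c2: "finite I2" using less.prems(1) by (simp add: I2_def)
      have c3: "\<And>i. i\<in>I2 \<Longrightarrow> finite (A2 i)" using less.prems(2) by (auto simp: A2_def I2_def)
      have c4: "card K \<le> card (\<Union>(A2 ` K))" if K: "K \<subseteq> I2" for K
      proof -
        have finK: "finite K" using K c2 finite_subset by blast
        have eq: "\<Union>(A2 ` K) = \<Union>(A ` (K \<union> J0)) - U" by (auto simp: A2_def U_def)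
        have fin: "finite (\<Union>(A ` (K \<union> J0)))" using less.prems(2) K J0(1) finK finJ0 I2_def by auto
        have sub: "U \<subseteq> \<Union>(A ` (K \<union> J0))" by (auto simp: U_def)
        have "card (\<Union>(A2 ` K)) = card (\<Union>(A ` (K \<union> J0))) - card U"
          unfolding eq using fin sub by (simp add: card_Diff_subset finite_subset)
        moreover have "card (K \<union> J0) \<le> card (\<Union>(A ` (K \<union> J0)))"
          using K J0(1) I2_def by (intro less.prems(3)) auto
        moreover have "card (K \<union> J0) = card K + card J0"
          using K finK finJ0 by (subst card_Un_disjoint) (auto simp: I2_def)
        ultimately show ?thesis using eqc U_def by simp
      qed
      obtain R2 where R2: "inj_on R2 I2" "\<forall>i\<in>I2. R2 i \<in> A2 i"
        using less.hyps[OF c1 c2 c3 c4] by blast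
      define R where "R = (\<lambda>i. if i \<in> J0 then R1 i else R2 i)"
      have inU: "R1 i \<in> U" if "i \<in> J0" for i using R1(2) that U_def by auto
      have notU: "R2 i \<notin> U" if "i \<in> I2" for i using R2(2) that A2_def by auto
      have "inj_on R I"
        unfolding inj_on_def
      proof (intro ballI impI)
        fix a b assume ab: "a \<in> I" "b \<in> I" "R a = R b"
        show "a = b"
        proof (cases "a \<in> J0"; cases "b \<in> J0")
          assume "a \<in> J0" "b \<in> J0" then show ?thesis using ab R1(1) by (auto simp: R_def inj_on_def)
        next
          assume "a \<in> J0" "b \<notin> J0" then show ?thesis using ab inU[of a] notU[of b] by (auto simp: R_def I2_def)
        next
          assume "a \<notin> J0" "b \<in> J0" then show ?thesis using ab inU[of b] notU[of a] by (auto simp: R_def I2_def)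
        next
          assume "a \<notin> J0" "b \<notin> J0" then show ?thesis using ab R2(1) by (auto simp: R_def I2_def inj_on_def)
        qed
      qed
      moreover have "\<forall>i\<in>I. R i \<in> A i" using R1(2) R2(2) by (auto simp: R_def A2_def I2_def)
      ultimately show ?thesis by blast
    qed
  qed
qed

lemma regular_match:
  fixes E :: "'a \<Rightarrow> 'b \<Rightarrow> bool"
  assumes fin: "finite L" "finite R" and d: "d > 0"
    and dl: "\<And>x. x \<in> L \<Longrightarrow> card {y\<in>R. E x y} = d"
    and dr: "\<And>y. y \<in> R \<Longrightarrow> card {x\<in>L. E x y} = d"
  shows "\<exists>h. bij_betw h L R \<and> (\<forall>x\<in>L. E x (h x))"
proof -
  define A where "A x = {y\<in>R. E x y}" for x
  define sw where "sw = (\<lambda>(y::'b, x::'a). (x, y))"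
  have inj_sw: "inj_on sw X" for X by (auto simp: sw_def inj_on_def)
  have cntL: "card (SIGMA x:J. A x) = card J * d" if "J \<subseteq> L" for J
  proof -
    have "finite J" using that fin finite_subset by blast
    then have "card (SIGMA x:J. A x) = (\<Sum>x\<in>J. card (A x))"
      using fin by (simp add: card_SigmaI A_def)
    also have "\<dots> = (\<Sum>x\<in>J. d)" by (rule sum.cong) (use dl that in \<open>auto simp: A_def\<close>)
    finally show ?thesis by simp
  qed
  have cntR: "card (SIGMA y:N. {x\<in>L. E x y}) = card N * d" if "N \<subseteq> R" for N
  proof -
    have "finite N" using that fin finite_subset by blast
    then have "card (SIGMA y:N. {x\<in>L. E x y}) = (\<Sum>y\<in>N. card {x\<in>L. E x y})"
      using fin by (simp add: card_SigmaI)
    also have "\<dots> = (\<Sum>y\<in>N. d)" by (rule sum.cong) (use dr that in auto)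
    finally show ?thesis by simp
  qed
  have hallc: "card J \<le> card (\<Union>(A ` J))" if J: "J \<subseteq> L" for J
  proof -
    let ?N = "\<Union>(A ` J)"
    have NR: "?N \<subseteq> R" by (auto simp: A_def)
    have "(SIGMA x:J. A x) \<subseteq> sw ` (SIGMA y:?N. {x\<in>L. E x y})"
      using J by (auto simp: A_def sw_def image_iff)
    moreover have "finite (SIGMA y:?N. {x\<in>L. E x y})"
      using finite_subset[OF NR fin(2)] fin(1) by (intro finite_SigmaI) auto
    ultimately have "card (SIGMA x:J. A x) \<le> card (sw ` (SIGMA y:?N. {x\<in>L. E x y}))"
      by (simp add: card_mono)
    also have "\<dots> = card ?N * d" using card_image[OF inj_sw] cntR[OF NR] by simp
    finally show ?thesis using cntL[OF J] d by simp
  qed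
  have "\<exists>h. inj_on h L \<and> (\<forall>x\<in>L. h x \<in> A x)"
    by (rule hall[OF fin(1) _ hallc]) (simp add: A_def fin(2))
  then obtain h where h: "inj_on h L" "\<forall>x\<in>L. h x \<in> A x" by blast
  have "(SIGMA x:L. A x) = sw ` (SIGMA y:R. {x\<in>L. E x y})"
    by (auto simp: A_def sw_def image_iff)
  then have "card L * d = card R * d"
    using cntL[of L] cntR[of R] card_image[OF inj_sw] by (metis order_refl)
  then have cLR: "card L = card R" using d by simp
  have sub: "h ` L \<subseteq> R" using h(2) by (auto simp: A_def)
  have "card (h ` L) = card R" using card_image[OF h(1)] cLR by simp
  then have "h ` L = R" using sub fin card_subset_eq by blast
  then have "bij_betw h L R" using h(1) by (simp add: bij_betw_def)
  then show ?thesis using h(2) by (auto simp: A_def)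
qed

lemma copy_match:
  fixes E :: "'a \<Rightarrow> 'b \<Rightarrow> bool"
  assumes fin: "finite L0" "finite R0"
    and dl: "\<And>x. x \<in> L0 \<Longrightarrow> card {y\<in>R0. E x y} = dl"
    and dr: "\<And>y. y \<in> R0 \<Longrightarrow> card {x\<in>L0. E x y} = dr"
    and eq: "dl * b = dr * a" and pos: "0 < dl * b"
  shows "\<exists>h. bij_betw h (L0 \<times> {..<a}) (R0 \<times> {..<b}) \<and> (\<forall>z\<in>L0 \<times> {..<a}. E (fst z) (fst (h z)))"
proof -
  have "\<exists>h. bij_betw h (L0 \<times> {..<a}) (R0 \<times> {..<b}) \<and> (\<forall>z\<in>L0 \<times> {..<a}. (\<lambda>z w. E (fst z) (fst w)) z (h z))"
  proof (rule regular_match[where d = "dl * b"])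
    show "finite (L0 \<times> {..<a})" "finite (R0 \<times> {..<b})" using fin by auto
    show "0 < dl * b" by fact
  next
    fix z assume z: "z \<in> L0 \<times> {..<a}"
    have "{w \<in> R0 \<times> {..<b}. E (fst z) (fst w)} = {y\<in>R0. E (fst z) y} \<times> {..<b}" by auto
    then show "card {w \<in> R0 \<times> {..<b}. E (fst z) (fst w)} = dl * b"
      using dl[of "fst z"] z by (auto simp: card_cartesian_product)
  next
    fix w assume w: "w \<in> R0 \<times> {..<b}"
    have "{z \<in> L0 \<times> {..<a}. E (fst z) (fst w)} = {x\<in>L0. E x (fst w)} \<times> {..<a}" by auto
    then show "card {z \<in> L0 \<times> {..<a}. E (fst z) (fst w)} = dl * b"
      using dr[of "fst w"] w eq by (auto simp: card_cartesian_product)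
  qed
  then show ?thesis by simp
qed

lemma module_fscale: "module (fscale :: 'a::field \<Rightarrow> (nat \<Rightarrow> 'a) \<Rightarrow> _)"
  by unfold_locales (auto simp: fscale_def fun_eq_iff algebra_simps)

lemma sumv_apply:
  assumes "finite X"
  shows "(\<Sum>c\<in>X. basis_vec c) j = (if j \<in> X then (1::'a::field) else 0)"
  using assms
proof (induction X rule: finite_induct)
  case empty then show ?case by simp
next
  case (insert x F) then show ?case by (auto simp: basis_vec_def)
qed

lemma xi_span:
  fixes T :: "(nat \<Rightarrow> 'a::field) set"
  assumes fin: "finite P" "finite Q" "finite E" and i: "i \<in> P" "i \<notin> Q" "i \<notin> E"
    and sub: "P - Q \<subseteq> insert i E" "Q - P \<subseteq> E"
    and sp: "(\<Sum>c\<in>P. basis_vec c) \<in> fspan T" "(\<Sum>c\<in>Q. basis_vec c) \<in> fspan T"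
      "\<And>e. e \<in> E \<Longrightarrow> basis_vec e \<in> fspan T"
  shows "basis_vec i \<in> fspan T"
proof -
  interpret module "fscale :: 'a \<Rightarrow> _" by (rule module_fscale)
  have eq: "(basis_vec i :: nat \<Rightarrow> 'a) = (\<Sum>c\<in>P. basis_vec c) - (\<Sum>c\<in>Q. basis_vec c)
      - (\<Sum>c\<in>P - Q - {i}. basis_vec c) + (\<Sum>c\<in>Q - P. basis_vec c)"
  proof (rule ext)
    fix j
    show "(basis_vec i :: nat \<Rightarrow> 'a) j = ((\<Sum>c\<in>P. basis_vec c) - (\<Sum>c\<in>Q. basis_vec c)
      - (\<Sum>c\<in>P - Q - {i}. basis_vec c) + (\<Sum>c\<in>Q - P. basis_vec c)) j"
      using fin i by (simp add: sumv_apply) (auto simp: basis_vec_def)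
  qed
  have s1: "(\<Sum>c\<in>P - Q - {i}. basis_vec c) \<in> span T"
    by (rule span_sum) (use sub sp in auto)
  have s2: "(\<Sum>c\<in>Q - P. basis_vec c) \<in> span T"
    by (rule span_sum) (use sub sp in auto)
  show ?thesis unfolding eq
    by (intro span_add span_diff sp s1 s2)
qed

lemma card_subsets_containing:
  assumes "finite X" "V \<subseteq> X" "card V \<le> k"
  shows "card {B. B \<subseteq> X \<and> card B = k \<and> V \<subseteq> B} = (card X - card V) choose (k - card V)"
proof -
  have finV: "finite V" using assms finite_subset by blast
  have img: "{B. B \<subseteq> X \<and> card B = k \<and> V \<subseteq> B} = (\<lambda>D. D \<union> V) ` {D. D \<subseteq> X - V \<and> card D = k - card V}"
  proof (intro equalityI subsetI)
    fix B assume "B \<in> {B. B \<subseteq> X \<and> card B = k \<and> V \<subseteq> B}"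
    then have B: "B \<subseteq> X" "card B = k" "V \<subseteq> B" by auto
    have "finite B" using B(1) assms(1) finite_subset by blast
    then have "card (B - V) = k - card V" using B by (simp add: card_Diff_subset finV)
    moreover have "B = (B - V) \<union> V" using B by auto
    ultimately show "B \<in> (\<lambda>D. D \<union> V) ` {D. D \<subseteq> X - V \<and> card D = k - card V}"
      using B by (intro image_eqI[of _ _ "B - V"]) auto
  next
    fix B assume "B \<in> (\<lambda>D. D \<union> V) ` {D. D \<subseteq> X - V \<and> card D = k - card V}"
    then obtain D where D: "D \<subseteq> X - V" "card D = k - card V" "B = D \<union> V" by auto
    have "finite D" using D(1) assms(1) finite_subset by blast
    have "card (D \<union> V) = card D + card V" by (rule card_Un_disjoint) (use \<open>finite D\<close> finV D(1) in auto)
    then have "card B = k" using D(2,3) assms(3) by simp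
    then show "B \<in> {B. B \<subseteq> X \<and> card B = k \<and> V \<subseteq> B}" using D assms(2) by auto
  qed
  have inj: "inj_on (\<lambda>D. D \<union> V) {D. D \<subseteq> X - V \<and> card D = k - card V}"
    by (rule inj_onI) blast
  have "card (X - V) = card X - card V" using assms finV by (simp add: card_Diff_subset)
  then show ?thesis unfolding img card_image[OF inj] using assms(1) by (simp add: n_subsets)
qed

lemma trinom:
  assumes "a + b \<le> N"
  shows "(N choose a) * ((N - a) choose b) = (N choose b) * ((N - b) choose a)"
proof -
  have 1: "(N choose (a+b)) * ((a+b) choose a) = (N choose a) * ((N - a) choose b)"
    using choose_mult[of a "a+b" N] assms by simp
  have 2: "(N choose (a+b)) * ((a+b) choose b) = (N choose b) * ((N - b) choose a)"
    using choose_mult[of b "a+b" N] assms by simp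
  have "(a+b) choose a = (a+b) choose b" using binomial_symmetric[of a "a+b"] by simp
  then show ?thesis using 1 2 by simp
qed

lemma arith_block1:
  fixes p t x1 x2 :: nat
  assumes "(p - t) * x1 = t * ((p - t) choose t) * x2" "2*t < p" "1 \<le> t"
  shows "((p - t - 1) choose (t - 1)) * x2 = x1"
proof -
  have s: "Suc (p - t - 1) = p - t" "Suc (t - 1) = t" using assms by auto
  have e: "(p - t) * ((p - t - 1) choose (t - 1)) = ((p - t) choose t) * t"
    using Suc_times_binomial_eq[of "p - t - 1" "t - 1", unfolded s] .
  have "(p - t) * (((p - t - 1) choose (t - 1)) * x2) = (p - t) * x1"
    using assms(1) e by (metis mult.assoc mult.commute)
  moreover have "p - t > 0" using assms by auto
  ultimately show ?thesis by simp
qed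

lemma aux4:
  fixes A B C D x y :: nat
  assumes "A * B = C * D" "C * x = A * y"
  shows "A * (B * x) = A * (D * y)"
proof -
  have "A * (B * x) = (A * B) * x" by (simp add: mult.assoc)
  also have "\<dots> = D * (C * x)" using assms(1) by (simp add: ac_simps)
  also have "\<dots> = A * (D * y)" using assms(2) by (simp add: ac_simps)
  finally show ?thesis .
qed

lemma arith_blockj:
  fixes p t a x y :: nat
  assumes "((p - t) choose (a + 1)) * x = ((p - t) choose (a + t)) * y" "a + 2*t < p" "1 \<le> t"
  shows "((p - (a + t) - 1) choose (t - 1)) * y = ((a + t) choose (t - 1)) * x"
proof -
  have cm: "((p - t) choose (a + t)) * ((a + t) choose (a + 1)) = ((p - t) choose (a + 1)) * ((p - t - (a + 1)) choose (a + t - (a + 1)))"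
    by (rule choose_mult) (use assms in auto)
  have sym: "(a + t) choose (a + 1) = (a + t) choose (t - 1)"
    using binomial_symmetric[of "a+1" "a+t"] assms by (simp add: algebra_simps)
  have e1: "p - t - (a + 1) = p - (a + t) - 1" "a + t - (a + 1) = t - 1" using assms by auto
  have "((p - t) choose (a + t)) * (((a + t) choose (t - 1)) * x) = ((p - t) choose (a + t)) * (((p - (a + t) - 1) choose (t - 1)) * y)"
  proof -
    have cm': "((p - t) choose (a + t)) * ((a + t) choose (t - 1)) = ((p - t) choose (a + 1)) * ((p - (a + t) - 1) choose (t - 1))"
      using cm unfolding sym e1 .
    show ?thesis by (rule aux4[OF cm' assms(1)])
  qed
  moreover have "((p - t) choose (a + t)) > 0" using assms by simp
  ultimately show ?thesis by simp
qed

lemma arith_blockq: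
  fixes p t n0 m x y :: nat
  assumes "x * ((p - t) choose (n0 + 1)) = y" "p = n0 + t + 1 + m" "m < t"
  shows "((p - 1 - m) choose (t - 1 - m)) * y = (((t - 1) choose m) * ((p - 1 - m) choose (t - 1))) * x"
proof -
  define N where "N = p - 1"
  have pt: "p - t = n0 + 1 + m" using assms by simp
  have c1: "(p - t) choose (n0 + 1) = (p - t) choose m"
    unfolding pt using binomial_symmetric[of m "n0 + 1 + m"] by simp
  have e1: "(N choose (t - 1)) * ((t - 1) choose m) = (N choose m) * ((N - m) choose (t - 1 - m))"
    by (rule choose_mult) (use assms N_def in auto)
  have e2: "(N choose m) * ((N - m) choose (t - 1)) = (N choose (t - 1)) * ((N - (t - 1)) choose m)"
    by (rule trinom) (use assms N_def in auto)
  have e3: "N - (t - 1) = p - t" "p - 1 - m = N - m" using assms N_def by auto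
  have "(N choose m) * (((p - 1 - m) choose (t - 1 - m)) * y) = (N choose m) * ((((t - 1) choose m) * ((p - 1 - m) choose (t - 1))) * x)"
  proof -
    have "(N choose m) * (((p - 1 - m) choose (t - 1 - m)) * y)
        = ((N choose m) * ((N - m) choose (t - 1 - m))) * ((p - t) choose m) * x"
      using assms(1) c1 e3 by (simp add: mult.commute mult.left_commute)
    also have "\<dots> = (N choose (t - 1)) * ((t - 1) choose m) * ((p - t) choose m) * x"
      using e1 by simp
    also have "\<dots> = ((t - 1) choose m) * ((N choose (t - 1)) * ((N - (t - 1)) choose m)) * x"
      using e3 by (simp add: mult.commute mult.left_commute)
    also have "\<dots> = ((t - 1) choose m) * ((N choose m) * ((N - m) choose (t - 1))) * x"
      using e2 by simp
    also have "\<dots> = (N choose m) * ((((t - 1) choose m) * ((p - 1 - m) choose (t - 1))) * x)"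
      using e3 by (simp add: mult.commute mult.left_commute)
    finally show ?thesis .
  qed
  moreover have "N choose m > 0" using assms N_def by simp
  ultimately show ?thesis by simp
qed

definition lab :: "nat \<Rightarrow> (nat set \<times> nat set) \<times> nat \<Rightarrow> label" where
  "lab j = (\<lambda>((B, C), k). (j, B, C, k))"

lemma lab_inj: "inj_on (lab j) X"
  by (rule inj_onI) (auto simp: lab_def split: prod.splits)

lemma lab_app: "lab j ((B, C), k) = (j, B, C, k)" by (simp add: lab_def)

lemma lab_mem: "(r, B, C, k) \<in> lab j ` (X \<times> {..<a}) \<longleftrightarrow> r = j \<and> (B, C) \<in> X \<and> k < a"
proof
  assume "(r, B, C, k) \<in> lab j ` (X \<times> {..<a})"
  then obtain z where "z \<in> X \<times> {..<a}" "(r, B, C, k) = lab j z" by blast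
  then show "r = j \<and> (B, C) \<in> X \<and> k < a" by (auto simp: lab_def split: prod.splits)
next
  assume "r = j \<and> (B, C) \<in> X \<and> k < a"
  then show "(r, B, C, k) \<in> lab j ` (X \<times> {..<a})"
    using lab_app[of j B C k] by (metis SigmaI image_eqI lessThan_iff)
qed

lemma block_gen:
  fixes E :: "nat set \<times> nat set \<Rightarrow> nat set \<times> nat set \<Rightarrow> bool"
  assumes fin: "finite L0" "finite R0"
    and dl: "\<And>x. x \<in> L0 \<Longrightarrow> card {y\<in>R0. E x y} = dl"
    and dr: "\<And>y. y \<in> R0 \<Longrightarrow> card {x\<in>L0. E x y} = dr"
    and eq: "dl * b = dr * a" and pos: "0 < dl * b"
  shows "\<exists>H. bij_betw H (lab j1 ` (L0 \<times> {..<a})) (lab j2 ` (R0 \<times> {..<b}))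
     \<and> (\<forall>B C k. (B, C) \<in> L0 \<longrightarrow> k < a \<longrightarrow> (\<exists>B' C' k'. H (j1, B, C, k) = (j2, B', C', k') \<and> (B', C') \<in> R0 \<and> E (B, C) (B', C')))"
proof -
  obtain h where h: "bij_betw h (L0 \<times> {..<a}) (R0 \<times> {..<b})" "\<forall>z\<in>L0 \<times> {..<a}. E (fst z) (fst (h z))"
    using copy_match[OF fin dl dr eq pos] by blast
  define H where "H = lab j2 \<circ> h \<circ> inv_into (L0 \<times> {..<a}) (lab j1)"
  have b1: "bij_betw (lab j1) (L0 \<times> {..<a}) (lab j1 ` (L0 \<times> {..<a}))" using lab_inj by (simp add: bij_betw_imageI)
  have b2: "bij_betw (lab j2) (R0 \<times> {..<b}) (lab j2 ` (R0 \<times> {..<b}))" using lab_inj by (simp add: bij_betw_imageI)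
  have "bij_betw H (lab j1 ` (L0 \<times> {..<a})) (lab j2 ` (R0 \<times> {..<b}))"
    unfolding H_def using bij_betw_trans[OF bij_betw_trans[OF bij_betw_inv_into[OF b1] h(1)] b2] by (simp add: comp_assoc)
  moreover have "\<exists>B' C' k'. H (j1, B, C, k) = (j2, B', C', k') \<and> (B', C') \<in> R0 \<and> E (B, C) (B', C')"
    if "(B, C) \<in> L0" "k < a" for B C k
  proof -
    have z: "((B, C), k) \<in> L0 \<times> {..<a}" using that by auto
    have "(j1, B, C, k) = lab j1 ((B, C), k)" by (simp add: lab_def)
    then have "inv_into (L0 \<times> {..<a}) (lab j1) (j1, B, C, k) = ((B, C), k)"
      using inv_into_f_f[OF lab_inj z] by simp
    then have Hz: "H (j1, B, C, k) = lab j2 (h ((B, C), k))" by (simp add: H_def)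
    obtain B' C' k' where hz: "h ((B, C), k) = ((B', C'), k')" by (metis prod.exhaust)
    have "h ((B, C), k) \<in> R0 \<times> {..<b}" using h(1) z by (auto simp: bij_betw_def)
    moreover have "E (fst ((B, C), k)) (fst (h ((B, C), k)))" using h(2) z by blast
    ultimately show ?thesis using Hz hz by (auto simp: lab_def)
  qed
  ultimately show ?thesis by blast
qed

definition L0 :: "nat \<Rightarrow> nat \<Rightarrow> nat \<Rightarrow> nat \<Rightarrow> (nat set \<times> nat set) set" where
  "L0 p t i j = (if j = 1 then (\<lambda>A. (A, {})) ` {A. A \<subseteq> {1..p} - {i} \<and> card A = t}
     else {(B, C). B \<subseteq> {1..p} - {i} \<and> card B = t - 1 \<and> C \<subseteq> {1..p} - {i} - B \<and> card C = (j - 1) * t + 1})"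

definition R0 :: "nat \<Rightarrow> nat \<Rightarrow> nat \<Rightarrow> nat \<Rightarrow> nat \<Rightarrow> (nat set \<times> nat set) set" where
  "R0 p t q i j = (if j + 1 = q then (\<lambda>B. (B, {})) ` {B. B \<subseteq> {1..p} - {i} \<and> card B = t - 1}
     else {(B, C). C \<subseteq> {1..p} \<and> i \<in> C \<and> card C = j * t + 1 \<and> B \<subseteq> {1..p} - C \<and> card B = t - 1})"

lemma finite_pairs: "finite {(B, C). B \<subseteq> {1..p::nat} \<and> C \<subseteq> {1..p} \<and> P B C}"
proof -
  have "{(B, C). B \<subseteq> {1..p::nat} \<and> C \<subseteq> {1..p} \<and> P B C} \<subseteq> Pow {1..p} \<times> Pow {1..p}" by auto
  then show ?thesis by (rule finite_subset) auto
qed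

lemma finite_L0: "finite (L0 p t i j)"
proof -
  have "L0 p t i j \<subseteq> Pow {1..p} \<times> Pow {1..p}" by (auto simp: L0_def)
  then show ?thesis by (rule finite_subset) auto
qed

lemma finite_R0: "finite (R0 p t q i j)"
proof -
  have "R0 p t q i j \<subseteq> Pow {1..p} \<times> Pow {1..p}" by (auto simp: R0_def)
  then show ?thesis by (rule finite_subset) auto
qed

lemma block1:
  assumes t: "2 \<le> t" and pt: "2 * t < p" and i: "i \<in> {1..p}" and q: "3 \<le> q"
    and xi: "(p - t) * xi 1 = t * ((p - t) choose t) * xi 2" "xi 2 > 0"
  shows "\<exists>H. bij_betw H (lab 1 ` (L0 p t i 1 \<times> {..<xi 1})) (lab 2 ` (R0 p t q i 1 \<times> {..<xi 2}))
     \<and> (\<forall>B C k. (B, C) \<in> L0 p t i 1 \<longrightarrow> k < xi 1 \<longrightarrow> (\<exists>B' C' k'. H (1, B, C, k) = (2, B', C', k')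
          \<and> (B', C') \<in> R0 p t q i 1 \<and> C' = insert i (B \<union> C)))"
proof -
  let ?E = "\<lambda>x y. snd y = insert i (fst x \<union> snd x)"
  have R0eq: "R0 p t q i 1 = {(B, C). C \<subseteq> {1..p} \<and> i \<in> C \<and> card C = t + 1 \<and> B \<subseteq> {1..p} - C \<and> card B = t - 1}"
    using q by (simp add: R0_def)
  have L0eq: "L0 p t i 1 = (\<lambda>A. (A, {})) ` {A. A \<subseteq> {1..p} - {i} \<and> card A = t}"
    by (simp add: L0_def)
  have dl: "card {y\<in>R0 p t q i 1. ?E x y} = (p - t - 1) choose (t - 1)" if x: "x \<in> L0 p t i 1" for x
  proof -
    obtain A where A: "x = (A, {})" "A \<subseteq> {1..p} - {i}" "card A = t" using x L0eq by auto
    have finA: "finite A" using A(2) finite_subset by blast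
    have iA: "i \<notin> A" using A(2) by blast
    have cins: "card (insert i A) = t + 1" using A finA iA by simp
    have ins_sub: "insert i A \<subseteq> {1..p}" using A i by auto
    have cD: "card ({1..p} - insert i A) = p - t - 1"
      using card_Diff_subset[OF _ ins_sub] finA cins by simp
    have eq: "{y\<in>R0 p t q i 1. ?E x y} = (\<lambda>B. (B, insert i A)) ` {B. B \<subseteq> {1..p} - insert i A \<and> card B = t - 1}"
      unfolding R0eq using A cins ins_sub by auto
    have inj: "inj_on (\<lambda>B. (B, insert i A)) X" for X by (rule inj_onI) auto
    have fD: "finite ({1..p} - insert i A)" by simp
    show ?thesis unfolding eq card_image[OF inj] n_subsets[OF fD] cD ..
  qed
  have dr: "card {x\<in>L0 p t i 1. ?E x y} = 1" if y: "y \<in> R0 p t q i 1" for y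
  proof -
    obtain B C where BC: "y = (B, C)" "C \<subseteq> {1..p}" "i \<in> C" "card C = t + 1" "B \<subseteq> {1..p} - C" "card B = t - 1"
      using y R0eq by auto
    have finC: "finite C" using BC(2) finite_subset by blast
    have "{x\<in>L0 p t i 1. ?E x y} = {(C - {i}, {})}"
    proof (intro equalityI subsetI)
      fix x assume "x \<in> {x\<in>L0 p t i 1. ?E x y}"
      then obtain A where A: "x = (A, {})" "A \<subseteq> {1..p} - {i}" "C = insert i A" using L0eq BC(1) by auto
      then have "A = C - {i}" by blast
      then show "x \<in> {(C - {i}, {})}" using A(1) by simp
    next
      fix x :: "nat set \<times> nat set" assume "x \<in> {(C - {i}, {})}"
      then have x: "x = (C - {i}, {})" by simp
      have "card (C - {i}) = t" using BC finC by simp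
      moreover have "C - {i} \<subseteq> {1..p} - {i}" using BC(2) by blast
      ultimately have "x \<in> L0 p t i 1" unfolding L0eq x by (intro image_eqI[where x="C - {i}"]) auto
      then show "x \<in> {x\<in>L0 p t i 1. ?E x y}" using x BC by auto
    qed
    then show ?thesis by simp
  qed
  have eq: "((p - t - 1) choose (t - 1)) * xi 2 = 1 * xi 1"
    using arith_block1[OF xi(1)] pt t by simp
  have pos: "0 < ((p - t - 1) choose (t - 1)) * xi 2" using xi(2) pt t by simp
  show ?thesis using block_gen[OF finite_L0 finite_R0 dl dr eq pos, of 1 2] by auto
qed

lemma blockj:
  assumes t: "2 \<le> t" and j: "2 \<le> j" "j + 2 \<le> q" and jt: "j * t + t < p" and i: "i \<in> {1..p}"
    and xi: "((p - t) choose ((j - 1) * t + 1)) * xi j = ((p - t) choose (j * t)) * xi (j + 1)" "xi (j + 1) > 0"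
  shows "\<exists>H. bij_betw H (lab j ` (L0 p t i j \<times> {..<xi j})) (lab (j + 1) ` (R0 p t q i j \<times> {..<xi (j + 1)}))
     \<and> (\<forall>B C k. (B, C) \<in> L0 p t i j \<longrightarrow> k < xi j \<longrightarrow> (\<exists>B' C' k'. H (j, B, C, k) = (j + 1, B', C', k')
          \<and> (B', C') \<in> R0 p t q i j \<and> C' = insert i (B \<union> C)))"
proof -
  define a where "a = (j - 1) * t"
  have jta: "j * t = a + t" unfolding a_def using j by (cases j) auto
  let ?E = "\<lambda>x y. snd y = insert i (fst x \<union> snd x)"
  have R0eq: "R0 p t q i j = {(B, C). C \<subseteq> {1..p} \<and> i \<in> C \<and> card C = a + t + 1 \<and> B \<subseteq> {1..p} - C \<and> card B = t - 1}"
    using j jta by (simp add: R0_def)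
  have L0eq: "L0 p t i j = {(B, C). B \<subseteq> {1..p} - {i} \<and> card B = t - 1 \<and> C \<subseteq> {1..p} - {i} - B \<and> card C = a + 1}"
    using j by (simp add: L0_def a_def)
  have dl: "card {y\<in>R0 p t q i j. ?E x y} = (p - (a + t) - 1) choose (t - 1)" if x: "x \<in> L0 p t i j" for x
  proof -
    obtain B C where BC: "x = (B, C)" "B \<subseteq> {1..p} - {i}" "card B = t - 1" "C \<subseteq> {1..p} - {i} - B" "card C = a + 1"
      using x L0eq by auto
    define C' where "C' = insert i (B \<union> C)"
    have finB: "finite B" using BC(2) finite_subset by blast
    have finC: "finite C" using BC(4) finite_subset by blast
    have iBC: "i \<notin> B \<union> C" using BC by blast
    have "card (B \<union> C) = card B + card C" by (rule card_Un_disjoint) (use finB finC BC(4) in auto)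
    then have cC': "card C' = a + t + 1" unfolding C'_def using finB finC iBC BC t by simp
    have subC': "C' \<subseteq> {1..p}" unfolding C'_def using BC i by auto
    have cD: "card ({1..p} - C') = p - (a + t) - 1"
      using card_Diff_subset[OF _ subC'] finB finC cC' unfolding C'_def by simp
    have eq: "{y\<in>R0 p t q i j. ?E x y} = (\<lambda>B'. (B', C')) ` {B'. B' \<subseteq> {1..p} - C' \<and> card B' = t - 1}"
      unfolding R0eq using BC(1) cC' subC' C'_def by auto
    have inj: "inj_on (\<lambda>B'. (B', C')) X" for X by (rule inj_onI) auto
    have fD: "finite ({1..p} - C')" by simp
    show ?thesis unfolding eq card_image[OF inj] n_subsets[OF fD] cD ..
  qed
  have dr: "card {x\<in>L0 p t i j. ?E x y} = (a + t) choose (t - 1)" if y: "y \<in> R0 p t q i j" for y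
  proof -
    obtain B' C' where BC: "y = (B', C')" "C' \<subseteq> {1..p}" "i \<in> C'" "card C' = a + t + 1" "B' \<subseteq> {1..p} - C'" "card B' = t - 1"
      using y R0eq by auto
    have finC: "finite C'" using BC(2) finite_subset by blast
    have cCi: "card (C' - {i}) = a + t" using BC finC by simp
    have eq: "{x\<in>L0 p t i j. ?E x y} = (\<lambda>B. (B, C' - {i} - B)) ` {B. B \<subseteq> C' - {i} \<and> card B = t - 1}"
    proof (intro equalityI subsetI)
      fix x assume "x \<in> {x\<in>L0 p t i j. ?E x y}"
      then obtain B C where x: "x = (B, C)" "B \<subseteq> {1..p} - {i}" "card B = t - 1" "C \<subseteq> {1..p} - {i} - B"
          "C' = insert i (B \<union> C)"
        using L0eq BC(1) by auto
      have "C = C' - {i} - B" using x by blast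
      moreover have "B \<subseteq> C' - {i}" using x by blast
      ultimately show "x \<in> (\<lambda>B. (B, C' - {i} - B)) ` {B. B \<subseteq> C' - {i} \<and> card B = t - 1}"
        using x by (intro image_eqI[where x=B]) auto
    next
      fix x assume "x \<in> (\<lambda>B. (B, C' - {i} - B)) ` {B. B \<subseteq> C' - {i} \<and> card B = t - 1}"
      then obtain B where B: "x = (B, C' - {i} - B)" "B \<subseteq> C' - {i}" "card B = t - 1" by auto
      have "card (C' - {i} - B) = a + t - (t - 1)"
        using card_Diff_subset[OF _ B(2)] B(2,3) cCi finC finite_subset by (metis finite_Diff)
      then have "card (C' - {i} - B) = a + 1" using t by simp
      moreover have "B \<subseteq> {1..p} - {i}" "C' - {i} - B \<subseteq> {1..p} - {i} - B" using B(2) BC(2) by auto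
      moreover have "C' = insert i (B \<union> (C' - {i} - B))" using B(2) BC(3) by blast
      ultimately show "x \<in> {x\<in>L0 p t i j. ?E x y}" unfolding L0eq using B BC(1) by simp
    qed
    have inj: "inj_on (\<lambda>B. (B, C' - {i} - B)) X" for X by (rule inj_onI) auto
    have fD: "finite (C' - {i})" using finC by simp
    show ?thesis unfolding eq card_image[OF inj] n_subsets[OF fD] cCi ..
  qed
  have xi': "((p - t) choose (a + 1)) * xi j = ((p - t) choose (a + t)) * xi (j + 1)"
    using xi(1) jta a_def by simp
  have eq: "((p - (a + t) - 1) choose (t - 1)) * xi (j + 1) = ((a + t) choose (t - 1)) * xi j"
    by (rule arith_blockj[OF xi']) (use jt jta t in auto)
  have pos: "0 < ((p - (a + t) - 1) choose (t - 1)) * xi (j + 1)" using xi(2) jt jta t by simp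
  show ?thesis using block_gen[OF finite_L0 finite_R0 dl dr eq pos, of j "j + 1"] by auto
qed

lemma blockq:
  assumes t: "2 \<le> t" and q: "3 \<le> q" and pm: "p = (q - 2) * t + t + 1 + m" and m: "m < t"
    and i: "i \<in> {1..p}"
    and xi: "xi (q - 1) * ((p - t) choose ((q - 2) * t + 1)) = xi q" "xi q > 0"
  shows "\<exists>H. bij_betw H (lab (q - 1) ` (L0 p t i (q - 1) \<times> {..<xi (q - 1)})) (lab (q - 1 + 1) ` (R0 p t q i (q - 1) \<times> {..<xi (q - 1 + 1)}))
     \<and> (\<forall>B C k. (B, C) \<in> L0 p t i (q - 1) \<longrightarrow> k < xi (q - 1) \<longrightarrow> (\<exists>B' C' k'. H (q - 1, B, C, k) = (q - 1 + 1, B', C', k')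
          \<and> (B', C') \<in> R0 p t q i (q - 1) \<and> {1..p} - {i} - (B \<union> C) \<subseteq> B'))"
proof -
  define n0 where "n0 = (q - 2) * t"
  define S where "S = {1..p} - {i}"
  have finS: "finite S" by (simp add: S_def)
  have cS: "card S = p - 1" using i by (simp add: S_def)
  let ?E = "\<lambda>x y. S - (fst x \<union> snd x) \<subseteq> fst y"
  have R0eq: "R0 p t q i (q - 1) = (\<lambda>B. (B, {})) ` {B. B \<subseteq> S \<and> card B = t - 1}"
    using q by (simp add: R0_def S_def)
  have L0eq: "L0 p t i (q - 1) = {(B, C). B \<subseteq> S \<and> card B = t - 1 \<and> C \<subseteq> S - B \<and> card C = n0 + 1}"
  proof -
    have h1: "(q - 1 = 1) = False" using q by simp
    have h2: "q - 1 - 1 = q - 2" by simp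
    show ?thesis unfolding L0_def n0_def S_def h2 by (simp only: h1 if_False)
  qed
  have cardV: "card (S - (B \<union> C)) = m" if "B \<subseteq> S" "card B = t - 1" "C \<subseteq> S - B" "card C = n0 + 1" for B C
  proof -
    have finB: "finite B" using that finS finite_subset by blast
    have finC: "finite C" using that finS finite_subset by (metis finite_Diff)
    have "card (B \<union> C) = card B + card C" by (rule card_Un_disjoint) (use finB finC that in auto)
    moreover have "B \<union> C \<subseteq> S" using that by auto
    ultimately have "card (S - (B \<union> C)) = card S - (card B + card C)" using card_Diff_subset finB finC by (metis finite_UnI)
    then show ?thesis using that cS pm n0_def t by simp
  qed
  have dl: "card {y\<in>R0 p t q i (q - 1). ?E x y} = (p - 1 - m) choose (t - 1 - m)" if x: "x \<in> L0 p t i (q - 1)" for x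
  proof -
    obtain B C where BC: "x = (B, C)" "B \<subseteq> S" "card B = t - 1" "C \<subseteq> S - B" "card C = n0 + 1"
      using x L0eq by auto
    define V where "V = S - (B \<union> C)"
    have cV: "card V = m" unfolding V_def using cardV BC by blast
    have VS: "V \<subseteq> S" unfolding V_def by blast
    have eq: "{y\<in>R0 p t q i (q - 1). ?E x y} = (\<lambda>B'. (B', {})) ` {B'. B' \<subseteq> S \<and> card B' = t - 1 \<and> V \<subseteq> B'}"
      unfolding R0eq using BC(1) V_def by auto
    have inj: "inj_on (\<lambda>B'. (B', {}::nat set)) X" for X by (rule inj_onI) auto
    have "card {B'. B' \<subseteq> S \<and> card B' = t - 1 \<and> V \<subseteq> B'} = (card S - card V) choose (t - 1 - card V)"
      by (rule card_subsets_containing[OF finS VS]) (use cV m in auto)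
    then show ?thesis unfolding eq card_image[OF inj] using cS cV by simp
  qed
  have dr: "card {x\<in>L0 p t i (q - 1). ?E x y} = ((t - 1) choose m) * ((p - 1 - m) choose (t - 1))"
    if y: "y \<in> R0 p t q i (q - 1)" for y
  proof -
    obtain B' where B': "y = (B', {})" "B' \<subseteq> S" "card B' = t - 1" using y R0eq by auto
    have finB': "finite B'" using B'(2) finS finite_subset by blast
    define f where "f = (\<lambda>(V, B). (B, S - V - B))"
    define D where "D = (SIGMA V:{V. V \<subseteq> B' \<and> card V = m}. {B. B \<subseteq> S - V \<and> card B = t - 1})"
    have eq: "{x\<in>L0 p t i (q - 1). ?E x y} = f ` D"
    proof (intro equalityI subsetI)
      fix x assume "x \<in> {x\<in>L0 p t i (q - 1). ?E x y}"
      then obtain B C where x: "x = (B, C)" "B \<subseteq> S" "card B = t - 1" "C \<subseteq> S - B" "card C = n0 + 1"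
          "S - (B \<union> C) \<subseteq> B'"
        using L0eq B'(1) by auto
      have "card (S - (B \<union> C)) = m" using cardV x by blast
      then have "(S - (B \<union> C), B) \<in> D" unfolding D_def using x by auto
      moreover have "f (S - (B \<union> C), B) = x" unfolding f_def using x by auto
      ultimately show "x \<in> f ` D" by (metis image_eqI)
    next
      fix x assume "x \<in> f ` D"
      then obtain V B where VB: "x = (B, S - V - B)" "V \<subseteq> B'" "card V = m" "B \<subseteq> S - V" "card B = t - 1"
        unfolding D_def f_def by auto
      have VS: "V \<subseteq> S" using VB(2) B'(2) by blast
      have finV: "finite V" using VS finS finite_subset by blast
      have finB: "finite B" using VB(4) finS finite_subset by (metis finite_Diff)
      have "card (S - V - B) = card (S - V) - card B" using card_Diff_subset[OF finB VB(4)] .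
      also have "card (S - V) = card S - card V" using card_Diff_subset[OF finV VS] .
      finally have "card (S - V - B) = n0 + 1" using cS VB pm n0_def t m by simp
      moreover have "S - (B \<union> (S - V - B)) \<subseteq> B'" using VB(2) by blast
      moreover have "B \<subseteq> S" "S - V - B \<subseteq> S - B" using VB(4) by auto
      ultimately show "x \<in> {x\<in>L0 p t i (q - 1). ?E x y}" unfolding L0eq using VB(1,5) B'(1) by simp
    qed
    have inj: "inj_on f D"
    proof (rule inj_onI)
      fix u v assume uv: "u \<in> D" "v \<in> D" "f u = f v"
      obtain V1 B1 where u: "u = (V1, B1)" "V1 \<subseteq> B'" "B1 \<subseteq> S - V1" using uv(1) D_def by auto
      obtain V2 B2 where v: "v = (V2, B2)" "V2 \<subseteq> B'" "B2 \<subseteq> S - V2" using uv(2) D_def by auto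
      have "B1 = B2" "S - V1 - B1 = S - V2 - B2" using uv(3) u v f_def by auto
      moreover have "V1 \<subseteq> S" "V2 \<subseteq> S" using u v B'(2) by auto
      ultimately have "V1 = V2" using u v by blast
      then show "u = v" using u v \<open>B1 = B2\<close> by simp
    qed
    have "card D = (\<Sum>V\<in>{V. V \<subseteq> B' \<and> card V = m}. card {B. B \<subseteq> S - V \<and> card B = t - 1})"
      unfolding D_def by (rule card_SigmaI) (use finB' finS in auto)
    also have "\<dots> = (\<Sum>V\<in>{V. V \<subseteq> B' \<and> card V = m}. (p - 1 - m) choose (t - 1))"
    proof (rule sum.cong)
      fix V assume "V \<in> {V. V \<subseteq> B' \<and> card V = m}"
      then have V: "V \<subseteq> S" "card V = m" using B'(2) by auto
      have finV: "finite V" using V finS finite_subset by blast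
      have "card (S - V) = p - 1 - m" using card_Diff_subset[OF finV V(1)] cS V by simp
      moreover have "finite (S - V)" using finS by simp
      ultimately show "card {B. B \<subseteq> S - V \<and> card B = t - 1} = (p - 1 - m) choose (t - 1)"
        by (simp add: n_subsets)
    qed simp
    also have "\<dots> = ((t - 1) choose m) * ((p - 1 - m) choose (t - 1))"
      using n_subsets[OF finB', of m] B'(3) by simp
    finally show ?thesis unfolding eq card_image[OF inj] .
  qed
  have xi': "xi (q - 1) * ((p - t) choose (n0 + 1)) = xi q" using xi(1) n0_def by simp
  have eq: "((p - 1 - m) choose (t - 1 - m)) * xi (q - 1 + 1) = (((t - 1) choose m) * ((p - 1 - m) choose (t - 1))) * xi (q - 1)"
    using arith_blockq[OF xi' _ m] pm n0_def q by simp
  have pos: "0 < ((p - 1 - m) choose (t - 1 - m)) * xi (q - 1 + 1)" using xi(2) pm q t m by simp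
  show ?thesis using block_gen[OF finite_L0 finite_R0 dl dr eq pos, of "q - 1" "q - 1 + 1"] S_def by auto
qed

lemma numeric:
  fixes p t :: nat and s :: rat
  assumes s2: "s > 2" and sZ: "s \<notin> \<int>" and t: "t > 1" and ps: "of_nat p = s * of_nat t"
  shows "3 \<le> nat \<lceil>s\<rceil>" "(nat \<lceil>s\<rceil> - 1) * t < p" "p < nat \<lceil>s\<rceil> * t"
proof -
  define c where "c = \<lceil>s\<rceil>"
  have c1: "of_int c - 1 < s" "s \<le> of_int c" using ceiling_correct[of s] c_def by auto
  have "s \<noteq> of_int c" using sZ by (metis Ints_of_int)
  then have c2: "s < of_int c" using c1 by simp
  have "of_int c > (2::rat)" using c1 s2 by linarith
  then have c3: "c \<ge> 3" by linarith
  then show "3 \<le> nat \<lceil>s\<rceil>" unfolding c_def[symmetric] by linarith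
  have tq: "(of_nat t :: rat) > 0" using t by simp
  have qc: "(of_nat (nat c) :: rat) = of_int c" using c3 by simp
  have "(of_nat p :: rat) < of_int c * of_nat t" using ps c2 tq by (simp add: mult_strict_right_mono)
  also have "\<dots> = of_nat (nat c * t)" using qc by simp
  finally show "p < nat \<lceil>s\<rceil> * t" unfolding c_def[symmetric] by (simp only: of_nat_less_iff)
  have "(of_nat ((nat c - 1) * t) :: rat) = (of_int c - 1) * of_nat t" using c3 qc by (simp add: of_nat_diff)
  also have "\<dots> < s * of_nat t" using c1 tq by (simp add: mult_strict_right_mono)
  also have "\<dots> = of_nat p" using ps by simp
  finally show "(nat \<lceil>s\<rceil> - 1) * t < p" unfolding c_def[symmetric] by (simp only: of_nat_less_iff)
qed

lemma bv_inj: "(basis_vec a :: nat \<Rightarrow> 'a::field) = basis_vec b \<Longrightarrow> a = b"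
  by (drule fun_cong[of _ _ a]) (auto simp: basis_vec_def split: if_splits)

lemma bv_neq_sum:
  assumes "finite X" "card X \<ge> 2"
  shows "(basis_vec i :: nat \<Rightarrow> 'a::field) \<noteq> (\<Sum>c\<in>X. basis_vec c)"
proof
  assume eq: "(basis_vec i :: nat \<Rightarrow> 'a) = (\<Sum>c\<in>X. basis_vec c)"
  have "card (X - {i}) \<ge> card X - 1" using diff_card_le_card_Diff[of "{i}" X] assms(1) by simp
  then have "card (X - {i}) \<noteq> 0" using assms(2) by linarith
  then have "X - {i} \<noteq> {}" by (metis card.empty)
  then obtain j where j: "j \<in> X" "j \<noteq> i" by blast
  have "(basis_vec i :: nat \<Rightarrow> 'a) j = (\<Sum>c\<in>X. basis_vec c) j" using eq by simp
  moreover have "(basis_vec i :: nat \<Rightarrow> 'a) j = 0" using j by (simp add: basis_vec_def)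
  moreover have "(\<Sum>c\<in>X. (basis_vec c :: nat \<Rightarrow> 'a)) j = 1" using j sumv_apply[OF assms(1), of j] by simp
  ultimately show False by simp
qed

lemma bv_in_image: "((basis_vec i :: nat \<Rightarrow> 'a::field) \<in> basis_vec ` B) = (i \<in> B)"
  using bv_inj by (metis image_iff)

definition Ed :: "nat \<Rightarrow> nat \<Rightarrow> nat \<Rightarrow> nat \<Rightarrow> nat set \<Rightarrow> nat set \<Rightarrow> nat set \<Rightarrow> nat set \<Rightarrow> bool" where
  "Ed p q i j B C B' C' = (if j + 1 = q then {1..p} - {i} - (B \<union> C) \<subseteq> B' else C' = insert i (B \<union> C))"

lemma cells_eq: "cells p q (r, B, C, k) = (if r = 1 then basis_vec ` B
     else if r < q then basis_vec ` B \<union> {(\<Sum>c\<in>C. basis_vec c)}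
     else basis_vec ` B \<union> {(\<Sum>c\<in>{1..p} - B. basis_vec c)})"
  by (simp add: cells_def)

lemma pair_span:
  assumes q: "3 \<le> q" and j: "1 \<le> j" "j \<le> q - 1" and i: "i \<in> {1..p}"
    and L: "(B, C) \<in> L0 p t i j" and R: "(B', C') \<in> R0 p t q i j" and E: "Ed p q i j B C B' C'"
  shows "(basis_vec i :: nat \<Rightarrow> 'a::field) \<in> fspan (cells p q (j, B, C, k) \<union> cells p q (j + 1, B', C', k'))"
proof -
  define T where "T = (cells p q (j, B, C, k) \<union> cells p q (j + 1, B', C', k') :: (nat \<Rightarrow> 'a) set)"
  have base: "x \<in> fspan T" if "x \<in> T" for x using module.span_base[OF module_fscale] that by blast
  have zero: "0 \<in> fspan T" using module.span_zero[OF module_fscale] by blast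
  have finp: "finite X" if "X \<subseteq> {1..p}" for X using that finite_subset by blast
  have "(basis_vec i :: nat \<Rightarrow> 'a) \<in> fspan T"
  proof (cases "j = 1")
    case True
    then obtain A where A: "B = A" "C = {}" "A \<subseteq> {1..p} - {i}" using L by (auto simp: L0_def)
    have R': "C' \<subseteq> {1..p}" "i \<in> C'" "B' \<subseteq> {1..p} - C'" using R q True by (auto simp: R0_def)
    have E': "C' = insert i A" using E q True A by (simp add: Ed_def)
    have T1: "basis_vec ` A \<subseteq> T" "(\<Sum>c\<in>C'. basis_vec c) \<in> T"
      using True q A by (auto simp: T_def cells_eq)
    show ?thesis
    proof (rule xi_span[where P = C' and Q = "{}" and E = A])
      show "finite C'" "finite {}" "finite A" using R'(1) A(3) finp by (auto intro!: finp)
      show "i \<in> C'" "i \<notin> {}" "i \<notin> A" using R' A by auto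
      show "C' - {} \<subseteq> insert i A" "{} - C' \<subseteq> A" using E' by auto
      show "(\<Sum>c\<in>C'. basis_vec c) \<in> fspan T" using base T1 by blast
      show "(\<Sum>c\<in>{}. basis_vec c) \<in> fspan T" using zero by simp
      show "\<And>e. e \<in> A \<Longrightarrow> basis_vec e \<in> fspan T" using base T1 by blast
    qed
  next
    case False
    then have j2: "2 \<le> j" using j by simp
    have L': "B \<subseteq> {1..p} - {i}" "C \<subseteq> {1..p} - {i} - B" using L False by (auto simp: L0_def)
    show ?thesis
    proof (cases "j + 1 = q")
      case False
      have R': "C' \<subseteq> {1..p}" "i \<in> C'" "B' \<subseteq> {1..p} - C'" using R False by (auto simp: R0_def)
      have E': "C' = insert i (B \<union> C)" using E False by (simp add: Ed_def)
      have T1: "basis_vec ` B \<subseteq> T" "(\<Sum>c\<in>C'. basis_vec c) \<in> T" "(\<Sum>c\<in>C. basis_vec c) \<in> T"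
        using False j2 j q by (auto simp: T_def cells_eq)
      show ?thesis
      proof (rule xi_span[where P = C' and Q = C and E = B])
        show "finite C'" "finite C" "finite B" using R'(1) L' finp by (auto intro!: finp)
        show "i \<in> C'" "i \<notin> C" "i \<notin> B" using R' L' by auto
        show "C' - C \<subseteq> insert i B" "C - C' \<subseteq> B" using E' by auto
        show "(\<Sum>c\<in>C'. basis_vec c) \<in> fspan T" "(\<Sum>c\<in>C. basis_vec c) \<in> fspan T" using base T1 by blast+
        show "\<And>e. e \<in> B \<Longrightarrow> basis_vec e \<in> fspan T" using base T1 by blast
      qed
    next
      case True
      have R': "C' = {}" "B' \<subseteq> {1..p} - {i}" using R True by (auto simp: R0_def)
      have E': "{1..p} - {i} - (B \<union> C) \<subseteq> B'" using E True by (simp add: Ed_def)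
      have T1: "basis_vec ` B \<subseteq> T" "basis_vec ` B' \<subseteq> T" "(\<Sum>c\<in>{1..p} - B'. basis_vec c) \<in> T"
          "(\<Sum>c\<in>C. basis_vec c) \<in> T"
        using True j2 j q by (auto simp: T_def cells_eq)
      show ?thesis
      proof (rule xi_span[where P = "{1..p} - B'" and Q = C and E = "B \<union> B'"])
        show "finite ({1..p} - B')" "finite C" "finite (B \<union> B')" using R' L' finp by (auto intro!: finp)
        show "i \<in> {1..p} - B'" "i \<notin> C" "i \<notin> B \<union> B'" using R' L' i by auto
        show "{1..p} - B' - C \<subseteq> insert i (B \<union> B')" using E' by blast
        show "C - ({1..p} - B') \<subseteq> B \<union> B'" using L' by blast
        show "(\<Sum>c\<in>{1..p} - B'. basis_vec c) \<in> fspan T" "(\<Sum>c\<in>C. basis_vec c) \<in> fspan T" using base T1 by blast+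
        show "\<And>e. e \<in> B \<union> B' \<Longrightarrow> basis_vec e \<in> fspan T" using base T1 by blast
      qed
    qed
  qed
  then show ?thesis by (simp add: T_def)
qed

lemma L0_1: "(B, C) \<in> L0 p t i 1 \<longleftrightarrow> C = {} \<and> B \<subseteq> {1..p} - {i} \<and> card B = t"
  by (auto simp: L0_def)

lemma L0_j: "j \<noteq> 1 \<Longrightarrow> (B, C) \<in> L0 p t i j \<longleftrightarrow> B \<subseteq> {1..p} - {i} \<and> card B = t - 1 \<and> C \<subseteq> {1..p} - {i} - B \<and> card C = (j - 1) * t + 1"
  by (auto simp: L0_def)

lemma R0_q: "j + 1 = q \<Longrightarrow> (B, C) \<in> R0 p t q i j \<longleftrightarrow> C = {} \<and> B \<subseteq> {1..p} - {i} \<and> card B = t - 1"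
  by (auto simp: R0_def)

lemma R0_j: "j + 1 \<noteq> q \<Longrightarrow> (B, C) \<in> R0 p t q i j \<longleftrightarrow> C \<subseteq> {1..p} \<and> i \<in> C \<and> card C = j * t + 1 \<and> B \<subseteq> {1..p} - C \<and> card B = t - 1"
  by (auto simp: R0_def)

lemma AC_mem: "(r, B, C, k) \<in> array_code p t q xi \<longleftrightarrow>
   (r = 1 \<and> C = {} \<and> B \<subseteq> {1..p} \<and> card B = t \<and> k < xi 1)
 \<or> (2 \<le> r \<and> r \<le> q - 1 \<and> B \<subseteq> {1..p} \<and> card B = t - 1 \<and> C \<subseteq> {1..p} - B \<and> card C = (r - 1) * t + 1 \<and> k < xi r)
 \<or> (r = q \<and> C = {} \<and> B \<subseteq> {1..p} \<and> card B = t - 1 \<and> k < xi q)"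
  unfolding array_code_def by blast

lemma cell_char:
  assumes q: "3 \<le> q" and t: "2 \<le> t" and pt: "2 * t < p"
    and l: "(r, B, C, k) \<in> array_code p t q xi"
  shows "((basis_vec i :: nat \<Rightarrow> 'a::field) \<in> cells p q (r, B, C, k)) = (i \<in> B)"
proof -
  consider (one) "r = 1" "C = {}" | (mid) "2 \<le> r" "r \<le> q - 1" "B \<subseteq> {1..p}" "C \<subseteq> {1..p} - B" "card C = (r - 1) * t + 1"
    | (top) "r = q" "C = {}" "B \<subseteq> {1..p}" "card B = t - 1"
    using l unfolding AC_mem by blast
  then show ?thesis
  proof cases
    case one then show ?thesis by (simp add: cells_eq bv_in_image)
  next
    case mid
    have "finite C" using mid(4) finite_subset by blast
    moreover have "card C \<ge> 2"
    proof -
      have "(r - 1) * t \<ge> 1 * t" using mid(1) by (intro mult_le_mono1) simp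
      then show ?thesis using mid(5) t by simp
    qed
    ultimately have "(basis_vec i :: nat \<Rightarrow> 'a) \<noteq> (\<Sum>c\<in>C. basis_vec c)" by (rule bv_neq_sum)
    moreover have "r \<noteq> 1" "r < q" using mid q by auto
    ultimately show ?thesis by (auto simp: cells_eq bv_in_image)
  next
    case top
    have finB: "finite B" using top(3) finite_subset by blast
    have "card ({1..p} - B) = p - (t - 1)" using card_Diff_subset[OF finB top(3)] top(4) by simp
    then have "card ({1..p} - B) \<ge> 2" using pt t by simp
    then have "(basis_vec i :: nat \<Rightarrow> 'a) \<noteq> (\<Sum>c\<in>{1..p} - B. basis_vec c)" by (intro bv_neq_sum) auto
    moreover have "r \<noteq> 1" "\<not> r < q" using top q by auto
    ultimately show ?thesis by (auto simp: cells_eq bv_in_image)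
  qed
qed

lemma Z_eq:
  assumes q: "3 \<le> q" and t: "2 \<le> t" and pt: "2 * t < p" and i: "i \<in> {1..p}"
  shows "{l \<in> array_code p t q xi. (basis_vec i :: nat \<Rightarrow> 'a::field) \<notin> cells p q l}
    = (\<Union>j\<in>{1..q-1}. lab j ` (L0 p t i j \<times> {..<xi j})) \<union> (\<Union>j\<in>{1..q-1}. lab (j + 1) ` (R0 p t q i j \<times> {..<xi (j + 1)}))"
    (is "?Z = ?L \<union> ?R")
proof (intro equalityI subsetI)
  fix l assume lZ: "l \<in> ?Z"
  obtain r B C k where l: "l = (r, B, C, k)" by (metis prod.exhaust)
  have ac: "(r, B, C, k) \<in> array_code p t q xi" using lZ l by simp
  have iB: "i \<notin> B" using lZ l cell_char[OF q t pt ac, where i = i, where 'a = 'a] by simp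
  consider (one) "r = 1" "C = {}" "B \<subseteq> {1..p}" "card B = t" "k < xi 1"
    | (mid) "2 \<le> r" "r \<le> q - 1" "B \<subseteq> {1..p}" "card B = t - 1" "C \<subseteq> {1..p} - B" "card C = (r - 1) * t + 1" "k < xi r"
    | (top) "r = q" "C = {}" "B \<subseteq> {1..p}" "card B = t - 1" "k < xi q"
    using ac unfolding AC_mem by blast
  then show "l \<in> ?L \<union> ?R"
  proof cases
    case one
    have "(B, C) \<in> L0 p t i 1" unfolding L0_1 using one iB by auto
    then have "l \<in> lab 1 ` (L0 p t i 1 \<times> {..<xi 1})" using one l by (simp add: lab_mem)
    moreover have "(1::nat) \<in> {1..q-1}" using q by simp
    ultimately show ?thesis by blast
  next
    case mid
    show ?thesis
    proof (cases "i \<in> C")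
      case True
      define j where "j = r - 1"
      have rj: "r = j + 1" "j \<in> {1..q-1}" "j + 1 \<noteq> q" using mid q j_def by auto
      have "(B, C) \<in> R0 p t q i j" using mid True rj by (auto simp: R0_j)
      then have "l \<in> lab (j + 1) ` (R0 p t q i j \<times> {..<xi (j + 1)})" using mid l rj by (simp add: lab_mem)
      then show ?thesis using rj by blast
    next
      case False
      have r1: "r \<noteq> 1" "r \<in> {1..q-1}" using mid by auto
      have "(B, C) \<in> L0 p t i r" using mid False iB r1 by (auto simp: L0_j)
      then have "l \<in> lab r ` (L0 p t i r \<times> {..<xi r})" using mid l by (simp add: lab_mem)
      then show ?thesis using r1 by blast
    qed
  next
    case top
    have rj: "r = (q - 1) + 1" "q - 1 \<in> {1..q-1}" using top q by auto
    have "(B, C) \<in> R0 p t q i (q - 1)" using top iB q by (auto simp: R0_q)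
    then have "l \<in> lab ((q - 1) + 1) ` (R0 p t q i (q - 1) \<times> {..<xi ((q - 1) + 1)})"
      using top l rj by (simp add: lab_mem)
    then show ?thesis using rj by blast
  qed
next
  fix l assume "l \<in> ?L \<union> ?R"
  then consider (L) j where "j \<in> {1..q-1}" "l \<in> lab j ` (L0 p t i j \<times> {..<xi j})"
    | (R) j where "j \<in> {1..q-1}" "l \<in> lab (j + 1) ` (R0 p t q i j \<times> {..<xi (j + 1)})" by blast
  then have "l \<in> array_code p t q xi \<and> i \<notin> fst (snd l)"
  proof cases
    case L
    obtain r B C k where l: "l = (r, B, C, k)" by (metis prod.exhaust)
    have m: "r = j" "(B, C) \<in> L0 p t i j" "k < xi j" using L(2) l lab_mem by auto
    show ?thesis
    proof (cases "j = 1")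
      case True
      then have "C = {}" "B \<subseteq> {1..p} - {i}" "card B = t" using m(2)[unfolded True L0_1] by auto
      then show ?thesis using m l True by (auto simp: AC_mem)
    next
      case False
      then show ?thesis using m l L(1) by (auto simp: L0_j AC_mem)
    qed
  next
    case R
    obtain r B C k where l: "l = (r, B, C, k)" by (metis prod.exhaust)
    have m: "r = j + 1" "(B, C) \<in> R0 p t q i j" "k < xi (j + 1)" using R(2) l lab_mem by auto
    show ?thesis
    proof (cases "j + 1 = q")
      case True
      then show ?thesis using m l by (auto simp: R0_q AC_mem)
    next
      case False
      have "C \<subseteq> {1..p} - B" "i \<notin> B" using m(2) False by (auto simp: R0_j)
      moreover have "2 \<le> j + 1" "j + 1 \<le> q - 1" using R(1) False by auto
      ultimately show ?thesis using m l False by (auto simp: R0_j AC_mem)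
    qed
  qed
  moreover obtain r B C k where l: "l = (r, B, C, k)" by (metis prod.exhaust)
  ultimately show "l \<in> ?Z" using cell_char[OF q t pt, of r B C k xi i, where 'a = 'a] by auto
qed

theorem theorem11:
  fixes p t :: nat and s :: rat and xi :: "nat \<Rightarrow> nat"
  assumes "s > 2" and "s \<notin> \<int>" and "t > 1" and "of_nat p = s * of_nat t"
    and "\<And>r. 1 \<le> r \<Longrightarrow> r \<le> nat \<lceil>s\<rceil> \<Longrightarrow> xi r > 0"
    and "xi (nat \<lceil>s\<rceil> - 1) * ((p - t) choose ((nat \<lceil>s\<rceil> - 2) * t + 1)) = xi (nat \<lceil>s\<rceil>)"
    and "\<And>r. 2 \<le> r \<Longrightarrow> r \<le> nat \<lceil>s\<rceil> - 2 \<Longrightarrow>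
           ((p - t) choose ((r - 1) * t + 1)) * xi r = ((p - t) choose (r * t)) * xi (r + 1)"
    and "(p - t) * xi 1 = t * ((p - t) choose t) * xi 2"
  shows "\<forall>i\<in>{1..p}. \<exists>M.
           (\<forall>e\<in>M. \<exists>c d. e = {c, d} \<and> c \<noteq> d \<and>
                basis_vec i \<in> fspan (cells p (nat \<lceil>s\<rceil>) c \<union> cells p (nat \<lceil>s\<rceil>) d
                                    :: (nat \<Rightarrow> 'a::{field,finite}) set))
         \<and> \<Union>M = {l \<in> array_code p t (nat \<lceil>s\<rceil>) xi.
                     (basis_vec i :: nat \<Rightarrow> 'a) \<notin> cells p (nat \<lceil>s\<rceil>) l}
         \<and> (\<forall>e\<in>M. \<forall>e'\<in>M. e \<noteq> e' \<longrightarrow> e \<inter> e' = {})"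
proof (intro ballI)
  fix i assume i: "i \<in> {1..p}"
  define q where "q = nat \<lceil>s\<rceil>"
  have q3: "3 \<le> q" and lo: "(q - 1) * t < p" and hi: "p < q * t"
    using numeric[OF assms(1-4)] unfolding q_def by auto
  have t2: "2 \<le> t" using assms(3) by simp
  define q' where "q' = q - 2"
  have qq: "q = q' + 2" using q3 q'_def by simp
  have e1: "(q - 1) * t = q' * t + t" "(q - 2) * t = q' * t" "q * t = q' * t + 2 * t"
    using qq by (simp_all add: algebra_simps)
  have q1: "1 \<le> q'" using q3 q'_def by simp
  have q't: "t \<le> q' * t" using mult_le_mono1[OF q1, of t] by simp
  define m where "m = p - (q - 1) * t - 1"
  have pm0: "p = q' * t + t + 1 + m" using lo e1(1) m_def by simp
  have pm: "p = (q - 2) * t + t + 1 + m" unfolding e1(2) by (rule pm0)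
  have mt: "m < t" using hi lo e1 m_def by simp
  have pt2: "2 * t < p" using lo e1(1) q't by linarith
  have xpos: "\<And>r. 1 \<le> r \<Longrightarrow> r \<le> q \<Longrightarrow> xi r > 0" using assms(5) q_def by simp
  have xq: "xi (q - 1) * ((p - t) choose ((q - 2) * t + 1)) = xi q" using assms(6) q_def by simp
  have xj: "\<And>r. 2 \<le> r \<Longrightarrow> r \<le> q - 2 \<Longrightarrow>
      ((p - t) choose ((r - 1) * t + 1)) * xi r = ((p - t) choose (r * t)) * xi (r + 1)"
    using assms(7) q_def by simp
  define LS where "LS j = lab j ` (L0 p t i j \<times> {..<xi j})" for j
  define RS where "RS j = lab (j + 1) ` (R0 p t q i j \<times> {..<xi (j + 1)})" for j
  define PP where "PP j H \<longleftrightarrow> bij_betw H (LS j) (RS j) \<and> (\<forall>B C k. (B, C) \<in> L0 p t i j \<longrightarrow> k < xi j \<longrightarrow>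
      (\<exists>B' C' k'. H (j, B, C, k) = (j + 1, B', C', k') \<and> (B', C') \<in> R0 p t q i j \<and> Ed p q i j B C B' C'))" for j H
  have ex: "\<forall>j\<in>{1..q-1}. \<exists>H. PP j H"
  proof
    fix j assume j: "j \<in> {1..q-1}"
    consider (one) "j = 1" | (mid) "2 \<le> j" "j \<le> q - 2" | (top) "j = q - 1" using j q3 by force
    then show "\<exists>H. PP j H"
    proof cases
      case one
      obtain H where H: "bij_betw H (lab 1 ` (L0 p t i 1 \<times> {..<xi 1})) (lab 2 ` (R0 p t q i 1 \<times> {..<xi 2}))"
        "\<forall>B C k. (B, C) \<in> L0 p t i 1 \<longrightarrow> k < xi 1 \<longrightarrow> (\<exists>B' C' k'. H (1, B, C, k) = (2, B', C', k')
          \<and> (B', C') \<in> R0 p t q i 1 \<and> C' = insert i (B \<union> C))"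
        using block1[OF t2 pt2 i q3 assms(8) xpos[of 2]] q3 by auto
      have "1 + 1 \<noteq> q" using q3 by simp
      then have "PP 1 H" unfolding PP_def LS_def RS_def Ed_def using H by (simp add: numeral_2_eq_2)
      then show ?thesis using one by blast
    next
      case mid
      have jt: "j * t + t < p"
      proof -
        have "(j + 1) * t \<le> (q - 1) * t" using mid by (intro mult_le_mono1) simp
        then show ?thesis using lo by simp
      qed
      obtain H where H: "bij_betw H (lab j ` (L0 p t i j \<times> {..<xi j})) (lab (j + 1) ` (R0 p t q i j \<times> {..<xi (j + 1)}))"
        "\<forall>B C k. (B, C) \<in> L0 p t i j \<longrightarrow> k < xi j \<longrightarrow> (\<exists>B' C' k'. H (j, B, C, k) = (j + 1, B', C', k')
          \<and> (B', C') \<in> R0 p t q i j \<and> C' = insert i (B \<union> C))"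
      proof -
        have jq: "j + 2 \<le> q" using mid q3 by simp
        have xj1: "xi (j + 1) > 0" using xpos[of "j + 1"] mid q3 by simp
        show ?thesis using blockj[OF t2 mid(1) jq jt i xj[OF mid] xj1] that by blast
      qed
      have "j + 1 \<noteq> q" using mid q3 by simp
      then have "PP j H" unfolding PP_def LS_def RS_def Ed_def using H by simp
      then show ?thesis by blast
    next
      case top
      obtain H where H: "bij_betw H (lab (q - 1) ` (L0 p t i (q - 1) \<times> {..<xi (q - 1)})) (lab (q - 1 + 1) ` (R0 p t q i (q - 1) \<times> {..<xi (q - 1 + 1)}))"
        "\<forall>B C k. (B, C) \<in> L0 p t i (q - 1) \<longrightarrow> k < xi (q - 1) \<longrightarrow> (\<exists>B' C' k'. H (q - 1, B, C, k) = (q - 1 + 1, B', C', k')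
          \<and> (B', C') \<in> R0 p t q i (q - 1) \<and> {1..p} - {i} - (B \<union> C) \<subseteq> B')"
        using blockq[OF t2 q3 pm mt i xq xpos[of q]] q3 by auto
      have "q - 1 + 1 = q" using q3 by simp
      then have "PP (q - 1) H" unfolding PP_def LS_def RS_def Ed_def using H by simp
      then show ?thesis using top by blast
    qed
  qed
  then obtain HH where HH: "\<forall>j\<in>{1..q-1}. PP j (HH j)" by (metis bchoice)
  have Zeq: "{l \<in> array_code p t q xi. (basis_vec i :: nat \<Rightarrow> 'a) \<notin> cells p q l}
      = (\<Union>j\<in>{1..q-1}. LS j) \<union> (\<Union>j\<in>{1..q-1}. RS j)"
    unfolding LS_def RS_def by (rule Z_eq[OF q3 t2 pt2 i])
  have Lmem: "\<exists>B C k. l = (j, B, C, k) \<and> (B, C) \<in> L0 p t i j \<and> k < xi j" if "l \<in> LS j" for l j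
  proof -
    obtain r B C k where l: "l = (r, B, C, k)" by (metis prod.exhaust)
    then show ?thesis using that lab_mem unfolding LS_def by auto
  qed
  have fstL: "fst l = j" if "l \<in> LS j" for l j using Lmem[OF that] by auto
  have Rmem: "\<exists>B C k. l = (j + 1, B, C, k) \<and> (B, C) \<in> R0 p t q i j" if "l \<in> RS j" for l j
  proof -
    obtain r B C k where l: "l = (r, B, C, k)" by (metis prod.exhaust)
    then show ?thesis using that lab_mem unfolding RS_def by auto
  qed
  have LRdisj: False if asm: "l \<in> LS j" "j \<in> {1..q-1}" "l \<in> RS j'" "j' \<in> {1..q-1}" for l j j'
  proof -
    obtain B C k where L: "l = (j, B, C, k)" "(B, C) \<in> L0 p t i j" using Lmem[OF asm(1)] by blast
    obtain B' C' k' where R: "l = (j' + 1, B', C', k')" "(B', C') \<in> R0 p t q i j'" using Rmem[OF asm(3)] by blast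
    have eqs: "j = j' + 1" "B = B'" "C = C'" using L R by auto
    then have "j \<noteq> 1" "j' + 1 \<noteq> q" using asm(2) asm(4) q3 by auto
    then have "i \<notin> C" "i \<in> C'" using L(2) R(2) by (auto simp: L0_j R0_j)
    then show False using eqs by simp
  qed
  have Hprop: "\<exists>B C k B' C' k'. l = (j, B, C, k) \<and> HH j l = (j + 1, B', C', k') \<and> (B, C) \<in> L0 p t i j
      \<and> (B', C') \<in> R0 p t q i j \<and> Ed p q i j B C B' C' \<and> HH j l \<in> RS j"
    if asm: "l \<in> LS j" "j \<in> {1..q-1}" for l j
  proof -
    obtain B C k where L: "l = (j, B, C, k)" "(B, C) \<in> L0 p t i j" "k < xi j" using Lmem[OF asm(1)] by blast
    have P: "PP j (HH j)" using HH asm(2) by blast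
    then obtain B' C' k' where "HH j (j, B, C, k) = (j + 1, B', C', k')" "(B', C') \<in> R0 p t q i j" "Ed p q i j B C B' C'"
      using L unfolding PP_def by blast
    moreover have "HH j l \<in> RS j" using P asm(1) unfolding PP_def bij_betw_def by blast
    ultimately show ?thesis using L by blast
  qed
  define Lall where "Lall = (\<Union>j\<in>{1..q-1}. LS j)"
  define M where "M = (\<lambda>l. {l, HH (fst l) l}) ` Lall"
  have "(\<forall>e\<in>M. \<exists>c d. e = {c, d} \<and> c \<noteq> d \<and>
           basis_vec i \<in> fspan (cells p q c \<union> cells p q d :: (nat \<Rightarrow> 'a) set))
         \<and> \<Union>M = {l \<in> array_code p t q xi. (basis_vec i :: nat \<Rightarrow> 'a) \<notin> cells p q l}
         \<and> (\<forall>e\<in>M. \<forall>e'\<in>M. e \<noteq> e' \<longrightarrow> e \<inter> e' = {})"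
  proof (intro conjI ballI impI)
    fix e assume "e \<in> M"
    then obtain l j where l: "e = {l, HH j l}" "l \<in> LS j" "j \<in> {1..q-1}"
      unfolding M_def Lall_def using fstL by blast
    obtain B C k B' C' k' where H: "l = (j, B, C, k)" "HH j l = (j + 1, B', C', k')" "(B, C) \<in> L0 p t i j"
        "(B', C') \<in> R0 p t q i j" "Ed p q i j B C B' C'"
      using Hprop[OF l(2,3)] by blast
    have "(basis_vec i :: nat \<Rightarrow> 'a) \<in> fspan (cells p q (j, B, C, k) \<union> cells p q (j + 1, B', C', k'))"
      by (rule pair_span[OF q3 _ _ i H(3) H(4) H(5)]) (use l(3) in auto)
    then show "\<exists>c d. e = {c, d} \<and> c \<noteq> d \<and> basis_vec i \<in> fspan (cells p q c \<union> cells p q d :: (nat \<Rightarrow> 'a) set)"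
      using l(1) H by (intro exI[of _ l] exI[of _ "HH j l"]) auto
  next
    show "\<Union>M = {l \<in> array_code p t q xi. (basis_vec i :: nat \<Rightarrow> 'a) \<notin> cells p q l}"
      unfolding Zeq
    proof (intro equalityI subsetI)
      fix z assume "z \<in> \<Union>M"
      then obtain l j where l: "z = l \<or> z = HH j l" "l \<in> LS j" "j \<in> {1..q-1}"
        unfolding M_def Lall_def using fstL by blast
      show "z \<in> (\<Union>j\<in>{1..q-1}. LS j) \<union> (\<Union>j\<in>{1..q-1}. RS j)"
        using l Hprop[OF l(2,3)] by blast
    next
      fix z assume "z \<in> (\<Union>j\<in>{1..q-1}. LS j) \<union> (\<Union>j\<in>{1..q-1}. RS j)"
      then consider (L) j where "z \<in> LS j" "j \<in> {1..q-1}" | (R) j where "z \<in> RS j" "j \<in> {1..q-1}" by blast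
      then show "z \<in> \<Union>M"
      proof cases
        case L
        then have "{z, HH (fst z) z} \<in> M" unfolding M_def Lall_def by blast
        then show ?thesis by blast
      next
        case R
        have "HH j ` LS j = RS j" using HH R(2) unfolding PP_def bij_betw_def by blast
        then obtain l where l: "l \<in> LS j" "z = HH j l" using R(1) by blast
        then have "{l, HH (fst l) l} \<in> M" unfolding M_def Lall_def using R(2) by blast
        moreover have "z \<in> {l, HH (fst l) l}" using l fstL by simp
        ultimately show ?thesis by blast
      qed
    qed
  next
    fix e e' assume ee: "e \<in> M" "e' \<in> M" "e \<noteq> e'"
    obtain l j where l: "e = {l, HH j l}" "l \<in> LS j" "j \<in> {1..q-1}"
      using ee(1) unfolding M_def Lall_def using fstL by blast
    obtain l' j' where l': "e' = {l', HH j' l'}" "l' \<in> LS j'" "j' \<in> {1..q-1}"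
      using ee(2) unfolding M_def Lall_def using fstL by blast
    have Hl: "HH j l \<in> RS j" "HH j' l' \<in> RS j'" using Hprop[OF l(2,3)] Hprop[OF l'(2,3)] by blast+
    have d1: "l \<noteq> l'"
    proof
      assume "l = l'"
      then have "j = j'" using fstL l(2) l'(2) by metis
      then show False using ee(3) l l' \<open>l = l'\<close> by simp
    qed
    have d2: "l \<noteq> HH j' l'" using LRdisj[OF l(2) l(3) _ l'(3)] Hl by blast
    have d3: "HH j l \<noteq> l'" using LRdisj[OF l'(2) l'(3) _ l(3)] Hl by blast
    have d4: "HH j l \<noteq> HH j' l'"
    proof (cases "j = j'")
      case True
      have "inj_on (HH j) (LS j)" using HH l(3) unfolding PP_def bij_betw_def by blast
      then show ?thesis using True d1 l(2) l'(2) by (metis inj_onD)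
    next
      case False
      obtain B C k where "HH j l = (j + 1, B, C, k)" using Hprop[OF l(2,3)] by blast
      moreover obtain B' C' k' where "HH j' l' = (j' + 1, B', C', k')" using Hprop[OF l'(2,3)] by blast
      ultimately show ?thesis using False by auto
    qed
    show "e \<inter> e' = {}" using l(1) l'(1) d1 d2 d3 d4 by auto
  qed
  then show "\<exists>M. (\<forall>e\<in>M. \<exists>c d. e = {c, d} \<and> c \<noteq> d \<and>
                basis_vec i \<in> fspan (cells p (nat \<lceil>s\<rceil>) c \<union> cells p (nat \<lceil>s\<rceil>) d
                                    :: (nat \<Rightarrow> 'a::{field,finite}) set))
         \<and> \<Union>M = {l \<in> array_code p t (nat \<lceil>s\<rceil>) xi.
                     (basis_vec i :: nat \<Rightarrow> 'a) \<notin> cells p (nat \<lceil>s\<rceil>) l}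
         \<and> (\<forall>e\<in>M. \<forall>e'\<in>M. e \<noteq> e' \<longrightarrow> e \<inter> e' = {})"
    unfolding q_def[symmetric] by blast
qed

end
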